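(* Let $f\colon X\to X$ be a homeomorphism of a metric space $X$. Every isolated set $\Lambda$ of $f$ admits a (discrete) catenary pseudo-metric.
   Context: An $f$-invariant set $\Lambda$ is isolated if there is a compact neighborhood $N$ of $\Lambda$ (an isolating neighborhood) such that $f^n(x)\in N$ for all $n\in\mathbb{Z}$ implies $x\in\Lambda$. For $\mathrm d\colon N\times N\to\mathbb{R}$, set $\ddot{\mathrm d}(x,y)=\mathrm d(f(x),f(y))-2\mathrm d(x,y)+\mathrm d(f^{-1}(x),f^{-1}(y))$ whenever all these points lie in $N$. A catenary pseudo-metric for $\Lambda$ is a continuous pseudo-metric $\mathrm d\colon N\times N\to\mathbb{R}$, with $N$ an isolating neighborhood of $\Lambda$, such that $\ddot{\mathrm d}=\mathrm d$ wherever defined, and $\mathrm d(x,y)=0$ if and only if $x=y$ or $x,y\in\Lambda$. *)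

theory Defs
  imports "HOL-Analysis.Analysis"
begin

definition zit :: "('a \<Rightarrow> 'a) \<Rightarrow> ('a \<Rightarrow> 'a) \<Rightarrow> int \<Rightarrow> 'a \<Rightarrow> 'a" where
  "zit f g n = (if 0 \<le> n then f ^^ nat n else g ^^ nat (- n))"

definition isolating_nbhd :: "('a::metric_space \<Rightarrow> 'a) \<Rightarrow> ('a \<Rightarrow> 'a) \<Rightarrow> 'a set \<Rightarrow> 'a set \<Rightarrow> bool" where
  "isolating_nbhd f g \<Lambda> N \<longleftrightarrow> compact N \<and> \<Lambda> \<subseteq> interior N \<and>
     (\<forall>x. (\<forall>n::int. zit f g n x \<in> N) \<longrightarrow> x \<in> \<Lambda>)"

definition isolated_set :: "('a::metric_space \<Rightarrow> 'a) \<Rightarrow> ('a \<Rightarrow> 'a) \<Rightarrow> 'a set \<Rightarrow> bool" where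
  "isolated_set f g \<Lambda> \<longleftrightarrow> f ` \<Lambda> = \<Lambda> \<and> (\<exists>N. isolating_nbhd f g \<Lambda> N)"

text \<open>Continuous pseudo-metric on N (values outside N \<times> N are irrelevant).\<close>
definition pseudo_metric_on :: "'a::metric_space set \<Rightarrow> ('a \<Rightarrow> 'a \<Rightarrow> real) \<Rightarrow> bool" where
  "pseudo_metric_on N d \<longleftrightarrow>
     (\<forall>x\<in>N. d x x = 0) \<and> (\<forall>x\<in>N. \<forall>y\<in>N. d x y = d y x) \<and>
     (\<forall>x\<in>N. \<forall>y\<in>N. \<forall>z\<in>N. d x z \<le> d x y + d y z)"

definition catenary_pseudo_metric ::
  "('a::metric_space \<Rightarrow> 'a) \<Rightarrow> ('a \<Rightarrow> 'a) \<Rightarrow> 'a set \<Rightarrow> 'a set \<Rightarrow> ('a \<Rightarrow> 'a \<Rightarrow> real) \<Rightarrow> bool" where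
  "catenary_pseudo_metric f g \<Lambda> N d \<longleftrightarrow>
     isolating_nbhd f g \<Lambda> N \<and>
     continuous_on (N \<times> N) (\<lambda>(x, y). d x y) \<and>
     pseudo_metric_on N d \<and>
     (\<forall>x\<in>N. \<forall>y\<in>N. f x \<in> N \<longrightarrow> f y \<in> N \<longrightarrow> g x \<in> N \<longrightarrow> g y \<in> N \<longrightarrow>
        d (f x) (f y) - 2 * d x y + d (g x) (g y) = d x y) \<and>
     (\<forall>x\<in>N. \<forall>y\<in>N. d x y = 0 \<longleftrightarrow> x = y \<or> (x \<in> \<Lambda> \<and> y \<in> \<Lambda>))"

end

theory Submission
  imports Defs
begin

definition Hd :: "'a::metric_space set \<Rightarrow> 'a \<Rightarrow> 'a \<Rightarrow> real" where
  "Hd N a b = min 1 (min (dist a b) (infdist a N + infdist b N))"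

definition rr :: real where "rr = (3 - sqrt 5) / 2"

definition Pd :: "'a::metric_space set \<Rightarrow> ('a \<Rightarrow> 'a) \<Rightarrow> 'a \<Rightarrow> 'a \<Rightarrow> real" where
  "Pd N F x y = (\<Sum>n. rr ^ n * Hd N ((F ^^ n) x) ((F ^^ n) y))"

lemma rr_pos: "0 < rr" and rr_lt1: "rr < 1"
proof -
  have "sqrt 5 < sqrt (3^2)" by (simp only: real_sqrt_less_iff) simp
  then have "sqrt 5 < 3" by simp
  moreover have "1 < sqrt 5" using real_sqrt_less_iff[of 1 5] by simp
  ultimately show "0 < rr" "rr < 1" unfolding rr_def by auto
qed

lemma rr_eq: "rr + 1 / rr = 3"
proof -
  have s: "sqrt 5 * sqrt 5 = 5" by simp
  have "rr * rr = 3 * rr - 1" unfolding rr_def using s by (simp add: field_simps)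
  then show ?thesis using rr_pos by (simp add: field_simps)
qed

lemma Hd_nonneg: "0 \<le> Hd N a b"
  unfolding Hd_def by (simp add: infdist_nonneg)

lemma Hd_le1: "Hd N a b \<le> 1"
  unfolding Hd_def by simp

lemma Hd_refl: "Hd N a a = 0"
  unfolding Hd_def by (simp add: infdist_nonneg)

lemma Hd_sym: "Hd N a b = Hd N b a"
  unfolding Hd_def by (simp add: dist_commute add.commute)

lemma Hd_in: "a \<in> N \<Longrightarrow> b \<in> N \<Longrightarrow> Hd N a b = 0"
  unfolding Hd_def by simp

lemma min1_tri: "(u::real) \<le> v + w \<Longrightarrow> 0 \<le> v \<Longrightarrow> 0 \<le> w \<Longrightarrow> min 1 u \<le> min 1 v + min 1 w"
  by (simp add: min_def)

lemma Hd_triangle: "Hd N a c \<le> Hd N a b + Hd N b c"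
proof -
  have ia: "infdist a N \<le> dist a b + infdist b N" using infdist_triangle[of a N b] by simp
  have ic: "infdist c N \<le> dist b c + infdist b N" using infdist_triangle[of c N b] by (simp add: dist_commute)
  have t: "dist a c \<le> dist a b + dist b c" by (rule dist_triangle)
  have n: "0 \<le> infdist a N" "0 \<le> infdist b N" "0 \<le> infdist c N" "0 \<le> dist a b" "0 \<le> dist b c"
    by (simp_all add: infdist_nonneg)
  have "min (dist a c) (infdist a N + infdist c N) \<le> min (dist a b) (infdist a N + infdist b N) + min (dist b c) (infdist b N + infdist c N)"
    unfolding min_def using ia ic t n by (auto split: if_splits)
  then show ?thesis unfolding Hd_def by (rule min1_tri) (use n in auto)
qed

lemma Hd_pos: "closed N \<Longrightarrow> N \<noteq> {} \<Longrightarrow> a \<notin> N \<Longrightarrow> a \<noteq> b \<Longrightarrow> 0 < Hd N a b"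
proof -
  assume "closed N" "N \<noteq> {}" "a \<notin> N" "a \<noteq> b"
  then have "infdist a N \<noteq> 0" using in_closed_iff_infdist_zero by blast
  then have "0 < infdist a N" using infdist_nonneg[of a N] by linarith
  then show ?thesis unfolding Hd_def using \<open>a \<noteq> b\<close> infdist_nonneg[of b N] by simp
qed

lemma term_bound: "norm (rr ^ n * Hd N a b) \<le> rr ^ n"
proof -
  have h: "0 \<le> Hd N a b" "Hd N a b \<le> 1" by (rule Hd_nonneg, rule Hd_le1)
  have p: "0 \<le> rr ^ n" using rr_pos by simp
  have "norm (rr ^ n * Hd N a b) = rr ^ n * Hd N a b" using h p by (simp add: abs_of_nonneg)
  also have "\<dots> \<le> rr ^ n * 1" using h p by (intro mult_left_mono) auto
  finally show ?thesis by simp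
qed

lemma summ: "summable (\<lambda>n. rr ^ n * Hd N (X n) (Y n))"
proof (rule summable_comparison_test[of _ "\<lambda>n. rr ^ n"])
  show "\<exists>N'. \<forall>n\<ge>N'. norm (rr ^ n * Hd N (X n) (Y n)) \<le> rr ^ n"
    using term_bound by blast
  show "summable (\<lambda>n. rr ^ n)" using rr_pos rr_lt1 by (simp add: summable_geometric)
qed

lemma summ': "summable (\<lambda>n. rr ^ n * Hd N ((F ^^ n) x) ((F ^^ n) y))"
  using summ[of N "\<lambda>n. (F ^^ n) x" "\<lambda>n. (F ^^ n) y"] .

lemma Pd_nonneg: "0 \<le> Pd N F x y"
  unfolding Pd_def by (intro suminf_nonneg summ' mult_nonneg_nonneg zero_le_power Hd_nonneg less_imp_le[OF rr_pos])

lemma Pd_refl: "Pd N F x x = 0"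
  unfolding Pd_def by (simp add: Hd_refl)

lemma Pd_sym: "Pd N F x y = Pd N F y x"
  unfolding Pd_def by (simp add: Hd_sym)

lemma Pd_triangle: "Pd N F x z \<le> Pd N F x y + Pd N F y z"
proof -
  have "Pd N F x y + Pd N F y z = (\<Sum>n. rr ^ n * Hd N ((F ^^ n) x) ((F ^^ n) y) + rr ^ n * Hd N ((F ^^ n) y) ((F ^^ n) z))"
    unfolding Pd_def by (rule suminf_add[OF summ' summ'])
  moreover have "Pd N F x z \<le> (\<Sum>n. rr ^ n * Hd N ((F ^^ n) x) ((F ^^ n) y) + rr ^ n * Hd N ((F ^^ n) y) ((F ^^ n) z))"
    unfolding Pd_def
  proof (rule suminf_le)
    fix n
    show "rr ^ n * Hd N ((F ^^ n) x) ((F ^^ n) z) \<le> rr ^ n * Hd N ((F ^^ n) x) ((F ^^ n) y) + rr ^ n * Hd N ((F ^^ n) y) ((F ^^ n) z)"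
      using Hd_triangle rr_pos by (simp add: distrib_left[symmetric] mult_left_mono)
  qed (rule summ', rule summable_add[OF summ' summ'])
  ultimately show ?thesis by simp
qed

lemma Pd_shift: "Pd N F x y = Hd N x y + rr * Pd N F (F x) (F y)"
proof -
  have "Pd N F x y = rr ^ 0 * Hd N ((F ^^ 0) x) ((F ^^ 0) y) + (\<Sum>n. rr ^ Suc n * Hd N ((F ^^ Suc n) x) ((F ^^ Suc n) y))"
    unfolding Pd_def using suminf_split_head[OF summ'[of N F x y]] by simp
  also have "(\<Sum>n. rr ^ Suc n * Hd N ((F ^^ Suc n) x) ((F ^^ Suc n) y)) = (\<Sum>n. rr * (rr ^ n * Hd N ((F ^^ n) (F x)) ((F ^^ n) (F y))))"
    by (simp add: funpow_swap1 mult.assoc)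
  also have "\<dots> = rr * Pd N F (F x) (F y)"
    unfolding Pd_def by (rule suminf_mult[OF summ'])
  finally show ?thesis by simp
qed

lemma Pd_cont:
  assumes "continuous_on UNIV F"
  shows "continuous_on S (\<lambda>(x, y). Pd N F x y)"
proof -
  have cF: "continuous_on UNIV (F ^^ n)" for n
    by (induction n) (auto intro: continuous_on_compose[OF _ continuous_on_subset[OF assms], unfolded o_def] simp: continuous_on_id)
  have cH: "continuous_on S (\<lambda>p. rr ^ i * Hd N ((F ^^ i) (fst p)) ((F ^^ i) (snd p)))" for i
    unfolding Hd_def
    by (intro continuous_intros continuous_on_compose2[OF cF[of i]]) auto
  have "uniform_limit S (\<lambda>n p. \<Sum>i<n. rr ^ i * Hd N ((F ^^ i) (fst p)) ((F ^^ i) (snd p)))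
      (\<lambda>p. \<Sum>i. rr ^ i * Hd N ((F ^^ i) (fst p)) ((F ^^ i) (snd p))) sequentially"
  proof (rule Weierstrass_m_test)
    show "norm (rr ^ i * Hd N ((F ^^ i) (fst p)) ((F ^^ i) (snd p))) \<le> rr ^ i" for i p
      by (rule term_bound)
    show "summable (\<lambda>i. rr ^ i)" using rr_pos rr_lt1 by (simp add: summable_geometric)
  qed
  then have "continuous_on S (\<lambda>p. \<Sum>i. rr ^ i * Hd N ((F ^^ i) (fst p)) ((F ^^ i) (snd p)))"
    by (rule uniform_limit_theorem[rotated]) (auto intro!: always_eventually continuous_on_sum cH)
  then show ?thesis unfolding Pd_def by (simp add: case_prod_beta')
qed

lemma Pd_zero:
  assumes "\<And>n. (F ^^ n) x \<in> N \<and> (F ^^ n) y \<in> N"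
  shows "Pd N F x y = 0"
  unfolding Pd_def using assms by (simp add: Hd_in)

lemma Pd_pos:
  assumes "closed N" "N \<noteq> {}" "inj F" "x \<noteq> y" "(F ^^ k) x \<notin> N \<or> (F ^^ k) y \<notin> N"
  shows "0 < Pd N F x y"
proof -
  have "inj (F ^^ k)" using assms(3) by simp
  then have ne: "(F ^^ k) x \<noteq> (F ^^ k) y" using assms(4) by (meson injD)
  have "0 < Hd N ((F ^^ k) x) ((F ^^ k) y)"
    using assms(5)
  proof
    assume "(F ^^ k) x \<notin> N" then show ?thesis using Hd_pos[OF assms(1,2)] ne by blast
  next
    assume "(F ^^ k) y \<notin> N" then show ?thesis using Hd_pos[OF assms(1,2)] ne Hd_sym by metis
  qed
  then have "0 < rr ^ k * Hd N ((F ^^ k) x) ((F ^^ k) y)" using rr_pos by simp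
  then show ?thesis unfolding Pd_def
    by (intro suminf_pos2[OF summ']) (auto intro!: mult_nonneg_nonneg zero_le_power Hd_nonneg less_imp_le[OF rr_pos])
qed

lemma iter_inv: "F ` L = L \<Longrightarrow> x \<in> L \<Longrightarrow> (F ^^ n) x \<in> L"
  by (induction n) auto

theorem mainTheorem16:
  fixes f g :: "'a::metric_space \<Rightarrow> 'a" and \<Lambda> :: "'a set"
  assumes "homeomorphism UNIV UNIV f g"
    and "isolated_set f g \<Lambda>"
  shows "\<exists>N d. catenary_pseudo_metric f g \<Lambda> N d"
proof -
  have gf: "\<And>x. g (f x) = x" and fg: "\<And>x. f (g x) = x" and cf: "continuous_on UNIV f"
    and cg: "continuous_on UNIV g"
    using assms(1) unfolding homeomorphism_def by auto
  have injf: "inj f" and injg: "inj g" by (metis gf injI, metis fg injI)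
  obtain N where iso: "isolating_nbhd f g \<Lambda> N" and fL: "f ` \<Lambda> = \<Lambda>"
    using assms(2) unfolding isolated_set_def by blast
  have gL: "g ` \<Lambda> = \<Lambda>"
  proof
    show "g ` \<Lambda> \<subseteq> \<Lambda>"
    proof
      fix u assume "u \<in> g ` \<Lambda>"
      then obtain y where y: "y \<in> \<Lambda>" "u = g y" by blast
      then have "y \<in> f ` \<Lambda>" using fL by simp
      then obtain z where "z \<in> \<Lambda>" "y = f z" by blast
      then show "u \<in> \<Lambda>" using y gf by simp
    qed
    show "\<Lambda> \<subseteq> g ` \<Lambda>"
    proof
      fix y assume "y \<in> \<Lambda>"
      then have "f y \<in> \<Lambda>" using fL by blast
      then show "y \<in> g ` \<Lambda>" using gf[of y] by (metis image_eqI)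
    qed
  qed
  have cN: "closed N" using iso unfolding isolating_nbhd_def by (auto intro: compact_imp_closed)
  have LN: "\<Lambda> \<subseteq> N" using iso interior_subset unfolding isolating_nbhd_def by blast
  have orb: "\<And>x. x \<notin> \<Lambda> \<Longrightarrow> \<exists>n::int. zit f g n x \<notin> N"
    using iso unfolding isolating_nbhd_def by blast
  define d where "d x y = Pd N f x y + Pd N g x y" for x y
  have pm: "pseudo_metric_on N d"
    unfolding pseudo_metric_on_def d_def
    using Pd_refl Pd_sym Pd_triangle by (smt (verit))
  have cont: "continuous_on (N \<times> N) (\<lambda>(x, y). d x y)"
  proof -
    have "continuous_on (N \<times> N) (\<lambda>p. (\<lambda>(x, y). Pd N f x y) p + (\<lambda>(x, y). Pd N g x y) p)"
      by (intro continuous_on_add Pd_cont cf cg)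
    then show ?thesis unfolding d_def by (simp add: case_prod_beta')
  qed
  have cat: "d (f x) (f y) - 2 * d x y + d (g x) (g y) = d x y"
    if "x \<in> N" "y \<in> N" "f x \<in> N" "f y \<in> N" "g x \<in> N" "g y \<in> N" for x y
  proof -
    have e1: "Pd N f x y = rr * Pd N f (f x) (f y)" using Pd_shift[of N f x y] Hd_in that by simp
    have e2: "Pd N f (g x) (g y) = rr * Pd N f x y" using Pd_shift[of N f "g x" "g y"] Hd_in that fg by simp
    have e3: "Pd N g x y = rr * Pd N g (g x) (g y)" using Pd_shift[of N g x y] Hd_in that by simp
    have e4: "Pd N g (f x) (f y) = rr * Pd N g x y" using Pd_shift[of N g "f x" "f y"] Hd_in that gf by simp
    have e5: "Pd N f (f x) (f y) = (1 / rr) * Pd N f x y" using e1 rr_pos by (simp add: field_simps)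
    have e6: "Pd N g (g x) (g y) = (1 / rr) * Pd N g x y" using e3 rr_pos by (simp add: field_simps)
    have "d (f x) (f y) - 2 * d x y + d (g x) (g y) = (rr + 1 / rr) * d x y - 2 * d x y"
      unfolding d_def e5 e2 e6 e4 by (simp add: algebra_simps)
    then show ?thesis using rr_eq by simp
  qed
  have zero: "d x y = 0 \<longleftrightarrow> x = y \<or> (x \<in> \<Lambda> \<and> y \<in> \<Lambda>)" if "x \<in> N" "y \<in> N" for x y
  proof
    assume "x = y \<or> (x \<in> \<Lambda> \<and> y \<in> \<Lambda>)"
    then show "d x y = 0"
    proof
      assume "x = y" then show ?thesis unfolding d_def by (simp add: Pd_refl)
    next
      assume L: "x \<in> \<Lambda> \<and> y \<in> \<Lambda>"
      have "Pd N f x y = 0" using L LN iter_inv[OF fL] by (intro Pd_zero) blast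
      moreover have "Pd N g x y = 0" using L LN iter_inv[OF gL] by (intro Pd_zero) blast
      ultimately show ?thesis unfolding d_def by simp
    qed
  next
    assume d0: "d x y = 0"
    show "x = y \<or> (x \<in> \<Lambda> \<and> y \<in> \<Lambda>)"
    proof (rule ccontr)
      assume c: "\<not> (x = y \<or> (x \<in> \<Lambda> \<and> y \<in> \<Lambda>))"
      then have xy: "x \<noteq> y" by blast
      have Nne: "N \<noteq> {}" using that by blast
      obtain w where w: "w \<in> {x, y}" "w \<notin> \<Lambda>" using c by blast
      obtain n :: int where n: "zit f g n w \<notin> N" using orb[OF w(2)] by blast
      have "0 < Pd N f x y \<or> 0 < Pd N g x y"
      proof (cases "0 \<le> n")
        case True
        then have "(f ^^ nat n) w \<notin> N" using n unfolding zit_def by simp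
        then have "(f ^^ nat n) x \<notin> N \<or> (f ^^ nat n) y \<notin> N" using w(1) by blast
        then show ?thesis using Pd_pos[OF cN Nne injf xy] by blast
      next
        case False
        then have "(g ^^ nat (- n)) w \<notin> N" using n unfolding zit_def by simp
        then have "(g ^^ nat (- n)) x \<notin> N \<or> (g ^^ nat (- n)) y \<notin> N" using w(1) by blast
        then show ?thesis using Pd_pos[OF cN Nne injg xy] by blast
      qed
      then show False using d0 Pd_nonneg[of N f x y] Pd_nonneg[of N g x y] unfolding d_def by linarith
    qed
  qed
  have "catenary_pseudo_metric f g \<Lambda> N d"
    unfolding catenary_pseudo_metric_def using iso cont pm cat zero by blast
  then show ?thesis by blast
qed

end
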